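(* Let $\Gamma^*$ be a group of permutations of $\mathbb Q\times\mathbb Z$ with $\Gamma^*\supseteq\Gamma(+1)$. If $\Gamma^*$ contains at least one negative permutation, then $\Gamma^*$ contains all negative permutations of $\mathbb Q\times\mathbb Z$.
   Context: $\mathbb Q\times\mathbb Z$ denotes the set $\mathbb Q\times\mathbb Z$ with the lexicographic order. A vertical is a set $\{r\}\times\mathbb Z$. A permutation is systemic if it maps every vertical onto a vertical; a systemic permutation is positive if it preserves the order on each vertical and negative if it reverses the order on each vertical. $\Gamma(+1)$ is the group of all positive permutations of $\mathbb Q\times\mathbb Z$ (the automorphism group of the successor relation). *)

theory Defs
  imports Main "HOL.Rat"
begin

definition lex_less :: "rat \<times> int \<Rightarrow> rat \<times> int \<Rightarrow> bool" where
  "lex_less p q \<longleftrightarrow> fst p < fst q \<or> (fst p = fst q \<and> snd p < snd q)"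

definition vertical :: "rat \<Rightarrow> (rat \<times> int) set" where
  "vertical r = {r} \<times> (UNIV :: int set)"

definition permutation_QZ :: "(rat \<times> int \<Rightarrow> rat \<times> int) \<Rightarrow> bool" where
  "permutation_QZ f \<longleftrightarrow> bij f"

definition systemic :: "(rat \<times> int \<Rightarrow> rat \<times> int) \<Rightarrow> bool" where
  "systemic f \<longleftrightarrow> permutation_QZ f \<and> (\<forall>r. \<exists>s. f ` vertical r = vertical s)"

definition positive_perm :: "(rat \<times> int \<Rightarrow> rat \<times> int) \<Rightarrow> bool" where
  "positive_perm f \<longleftrightarrow> systemic f \<and>
     (\<forall>r m n. m < n \<longrightarrow> lex_less (f (r, m)) (f (r, n)))"

definition negative_perm :: "(rat \<times> int \<Rightarrow> rat \<times> int) \<Rightarrow> bool" where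
  "negative_perm f \<longleftrightarrow> systemic f \<and>
     (\<forall>r m n. m < n \<longrightarrow> lex_less (f (r, n)) (f (r, m)))"

definition perm_group :: "(rat \<times> int \<Rightarrow> rat \<times> int) set \<Rightarrow> bool" where
  "perm_group G \<longleftrightarrow> (\<forall>f\<in>G. permutation_QZ f) \<and> id \<in> G \<and>
     (\<forall>f\<in>G. \<forall>g\<in>G. f \<circ> g \<in> G) \<and> (\<forall>f\<in>G. inv f \<in> G)"

definition Gamma_plus1 :: "(rat \<times> int \<Rightarrow> rat \<times> int) set" where
  "Gamma_plus1 = {f. positive_perm f}"

end

theory Submission
  imports Defs
begin

lemma sys_fst:
  assumes "systemic f" shows "fst (f (r,m)) = fst (f (r,n))"
proof -
  obtain s where s: "f ` vertical r = vertical s" using assms unfolding systemic_def by blast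
  have "f (r,m) \<in> vertical s" "f (r,n) \<in> vertical s" using s[symmetric] unfolding vertical_def by auto
  thus ?thesis unfolding vertical_def by auto
qed

lemma sys_inv:
  assumes "systemic f" shows "systemic (inv f)"
proof -
  have b: "bij f" using assms unfolding systemic_def permutation_QZ_def by blast
  have V: "\<exists>s. inv f ` vertical r = vertical s" for r
  proof -
    define r' where "r' = fst (inv f (r,0))"
    obtain s where s: "f ` vertical r' = vertical s" using assms unfolding systemic_def by blast
    have "inv f (r,0) \<in> vertical r'" unfolding vertical_def r'_def by (cases "inv f (r,0)") auto
    hence "f (inv f (r,0)) \<in> vertical s" using s by blast
    hence "(r,0) \<in> vertical s" using b by (simp add: bij_is_surj surj_f_inv_f)
    hence "s = r" unfolding vertical_def by auto
    hence "inv f ` vertical r = inv f ` f ` vertical r'" using s by simp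
    also have "\<dots> = vertical r'" using b by (simp add: bij_is_inj image_comp)
    finally show ?thesis by blast
  qed
  have "bij (inv f)" using b by (rule bij_imp_bij_inv)
  thus ?thesis unfolding systemic_def permutation_QZ_def using V by simp
qed

lemma sys_comp:
  assumes "systemic f" "systemic g" shows "systemic (f \<circ> g)"
proof -
  have V: "\<exists>s. (f \<circ> g) ` vertical r = vertical s" for r
  proof -
    obtain s where s: "g ` vertical r = vertical s" using assms(2) unfolding systemic_def by blast
    obtain t where t: "f ` vertical s = vertical t" using assms(1) unfolding systemic_def by blast
    have "(f \<circ> g) ` vertical r = vertical t" using s t by (metis image_comp)
    thus ?thesis by blast
  qed
  have "bij f" "bij g" using assms unfolding systemic_def permutation_QZ_def by simp_all
  hence "bij (f \<circ> g)" by (rule bij_comp[rotated])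
  thus ?thesis unfolding systemic_def permutation_QZ_def using V by simp
qed

lemma neg_snd:
  assumes "negative_perm f" "m < n" shows "snd (f (r,n)) < snd (f (r,m))"
proof -
  have "lex_less (f (r,n)) (f (r,m))" using assms unfolding negative_perm_def by blast
  moreover have "fst (f (r,n)) = fst (f (r,m))" using assms sys_fst unfolding negative_perm_def by blast
  ultimately show ?thesis unfolding lex_less_def by simp
qed

lemma neg_inv:
  assumes "negative_perm f" shows "negative_perm (inv f)"
proof -
  have sf: "systemic f" using assms negative_perm_def by blast
  have b: "bij f" using sf unfolding systemic_def permutation_QZ_def by blast
  have si: "systemic (inv f)" using sys_inv sf by blast
  have L: "lex_less (inv f (r,n)) (inv f (r,m))" if mn: "m < n" for r m n
  proof -
    define r' where "r' = fst (inv f (r,n))"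
    have "fst (inv f (r,m)) = r'" using sys_fst[OF si, of r m n] r'_def by simp
    obtain a where pa: "inv f (r,n) = (r',a)" using r'_def by (cases "inv f (r,n)") simp
    obtain b' where pb: "inv f (r,m) = (r',b')" using \<open>fst (inv f (r,m)) = r'\<close> by (cases "inv f (r,m)") simp
    note p = pa pb
    have sur: "\<And>y. f (inv f y) = y" using b by (simp add: bij_is_surj surj_f_inv_f)
    have fa: "f (r',a) = (r,n)" "f (r',b') = (r,m)" using sur[of "(r,n)"] sur[of "(r,m)"] p
      by simp_all
    have "a \<noteq> b'" using fa mn by auto
    moreover have "\<not> b' < a"
    proof
      assume "b' < a"
      hence "snd (f (r',a)) < snd (f (r',b'))" using neg_snd assms by blast
      thus False using fa mn by simp
    qed
    ultimately have "a < b'" by simp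
    thus ?thesis using p unfolding lex_less_def by simp
  qed
  show ?thesis unfolding negative_perm_def using si L by auto
qed

lemma neg_neg_pos:
  assumes "negative_perm h" "negative_perm g" shows "positive_perm (h \<circ> g)"
proof -
  have sc: "systemic (h \<circ> g)" using assms sys_comp[of h g] unfolding negative_perm_def by blast
  have L: "lex_less ((h \<circ> g) (r,m)) ((h \<circ> g) (r,n))" if mn: "m < n" for r m n
  proof -
    have sg: "systemic g" using assms negative_perm_def by blast
    define r' where "r' = fst (g (r,n))"
    have "fst (g (r,m)) = r'" using sys_fst[OF sg, of r m n] r'_def by simp
    obtain a where pa: "g (r,n) = (r',a)" using r'_def by (cases "g (r,n)") simp
    obtain b' where pb: "g (r,m) = (r',b')" using \<open>fst (g (r,m)) = r'\<close> by (cases "g (r,m)") simp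
    note p = pa pb
    have "a < b'" using neg_snd[OF assms(2) mn, of r] p by simp
    hence "lex_less (h (r',b')) (h (r',a))" using assms(1) unfolding negative_perm_def by blast
    thus ?thesis using p by simp
  qed
  show ?thesis unfolding positive_perm_def using sc L by auto
qed

theorem proposition3:
  fixes G :: "(rat \<times> int \<Rightarrow> rat \<times> int) set"
  assumes "perm_group G"
    and "Gamma_plus1 \<subseteq> G"
    and "\<exists>f\<in>G. negative_perm f"
  shows "{f. negative_perm f} \<subseteq> G"
proof
  fix h assume "h \<in> {f. negative_perm f}"
  hence h: "negative_perm h" by simp
  obtain f0 where f0: "f0 \<in> G" "negative_perm f0" using assms(3) by blast
  have "positive_perm (h \<circ> inv f0)" using neg_neg_pos[OF h neg_inv[OF f0(2)]] .
  hence g: "h \<circ> inv f0 \<in> G" using assms(2) Gamma_plus1_def by blast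
  have b: "bij f0" using f0(2) unfolding negative_perm_def systemic_def permutation_QZ_def by blast
  have "h = (h \<circ> inv f0) \<circ> f0" using b by (simp add: comp_assoc bij_is_inj)
  moreover have "(h \<circ> inv f0) \<circ> f0 \<in> G" using g f0(1) assms(1) unfolding perm_group_def by blast
  ultimately show "h \<in> G" by simp
qed

end
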